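(* Let $P$ be a poset. Then $P$ is $3$-representable if and only if $P\models\psi_n$ for all $n\in\omega$.
   Context: A poset $P$ is $3$-representable if there is a set $X$ and an order embedding $h:P\to\wp(X)$ ($\wp(X)$ ordered by inclusion) such that whenever $S\subseteq P$ with $|S|<3$ and $\bigwedge S$ exists in $P$ then $h(\bigwedge S)=\bigcap h[S]$ (with $\bigcap\emptyset=X$), and whenever $T\subseteq P$ with $|T|<3$ and $\bigvee T$ exists in $P$ then $h(\bigvee T)=\bigcup h[T]$. The sentences $\psi_n$ are in the signature with one binary relation $\leq$: let $J(x,y,z)$ be $x\leq z\wedge y\leq z\wedge\forall w((x\leq w\wedge y\leq w)\to z\leq w)$, $M(x,y,z)$ the dual formula (z is the meet of $x,y$), $C_k(x_1,\ldots,x_k,y)=\bigvee_{i=1}^k(y=x_i)$ (false for $k=0$), $D_k=\neg C_k$, $\vec{x}_m=(x_1,\ldots,x_m)$. Define $\phi_{m0}(\vec{x}_m,y)=D_m(\vec{x}_m,y)$ and $\phi_{m(n+1)}(\vec{x}_m,y)=\forall a\forall b\forall c\Big(\big(\exists d(C_m(\vec{x}_m,d)\wedge d\leq a)\to\phi_{(m+1)n}(\vec{x}_m,a,y)\big)\wedge\big((C_m(\vec{x}_m,a)\wedge C_m(\vec{x}_m,b)\wedge M(a,b,c))\to\phi_{(m+1)n}(\vec{x}_m,c,y)\big)\wedge\big((C_m(\vec{x}_m,c)\wedge J(a,b,c))\to(\phi_{(m+1)n}(\vec{x}_m,a,y)\vee\phi_{(m+1)n}(\vec{x}_m,b,y))\big)\Big)$,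 and $\psi_n=\forall x\forall y(\neg(x\leq y)\to\phi_{1n}(x,y))$. *)

theory Defs
  imports Main
begin

definition J :: "'a::order \<Rightarrow> 'a \<Rightarrow> 'a \<Rightarrow> bool" where
  "J x y z \<longleftrightarrow> x \<le> z \<and> y \<le> z \<and> (\<forall>w. x \<le> w \<and> y \<le> w \<longrightarrow> z \<le> w)"

definition M :: "'a::order \<Rightarrow> 'a \<Rightarrow> 'a \<Rightarrow> bool" where
  "M x y z \<longleftrightarrow> z \<le> x \<and> z \<le> y \<and> (\<forall>w. w \<le> x \<and> w \<le> y \<longrightarrow> w \<le> z)"

text \<open>Semantics of phi_{m n}(x_1..x_m, y): the list xs is (x_1,...,x_m), m = length xs.\<close>
fun phi :: "nat \<Rightarrow> 'a::order list \<Rightarrow> 'a \<Rightarrow> bool" where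
  "phi 0 xs y = (y \<notin> set xs)"
| "phi (Suc n) xs y =
     (\<forall>a b c.
        ((\<exists>d. d \<in> set xs \<and> d \<le> a) \<longrightarrow> phi n (xs @ [a]) y)
      \<and> ((a \<in> set xs \<and> b \<in> set xs \<and> M a b c) \<longrightarrow> phi n (xs @ [c]) y)
      \<and> ((c \<in> set xs \<and> J a b c) \<longrightarrow> (phi n (xs @ [a]) y \<or> phi n (xs @ [b]) y)))"

definition psi :: "nat \<Rightarrow> ('a::order) itself \<Rightarrow> bool" where
  "psi n _ \<longleftrightarrow> (\<forall>x y::'a. \<not> x \<le> y \<longrightarrow> phi n [x] y)"

definition is_meet :: "'a::order set \<Rightarrow> 'a \<Rightarrow> bool" where
  "is_meet S m \<longleftrightarrow> (\<forall>s\<in>S. m \<le> s) \<and> (\<forall>w. (\<forall>s\<in>S. w \<le> s) \<longrightarrow> w \<le> m)"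

definition is_join :: "'a::order set \<Rightarrow> 'a \<Rightarrow> bool" where
  "is_join T j \<longleftrightarrow> (\<forall>t\<in>T. t \<le> j) \<and> (\<forall>w. (\<forall>t\<in>T. t \<le> w) \<longrightarrow> j \<le> w)"

definition rep3 :: "'b set \<Rightarrow> ('a::order \<Rightarrow> 'b set) \<Rightarrow> bool" where
  "rep3 X h \<longleftrightarrow>
     (\<forall>p. h p \<subseteq> X)
   \<and> (\<forall>p q. h p \<subseteq> h q \<longleftrightarrow> p \<le> q)
   \<and> (\<forall>S m. finite S \<and> card S < 3 \<and> is_meet S m \<longrightarrow> h m = X \<inter> \<Inter>(h ` S))
   \<and> (\<forall>T j. finite T \<and> card T < 3 \<and> is_join T j \<longrightarrow> h j = \<Union>(h ` T))"

end

theory Submission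
  imports Defs
begin

lemma phiS_up: "phi (Suc n) xs y \<Longrightarrow> d \<in> set xs \<Longrightarrow> d \<le> a \<Longrightarrow> phi n (xs @ [a]) y"
  by auto

lemma phiS_meet: "phi (Suc n) xs y \<Longrightarrow> a \<in> set xs \<Longrightarrow> b \<in> set xs \<Longrightarrow> M a b c \<Longrightarrow> phi n (xs @ [c]) y"
  by auto

lemma phiS_join: "phi (Suc n) xs y \<Longrightarrow> c \<in> set xs \<Longrightarrow> J a b c \<Longrightarrow> phi n (xs @ [a]) y \<or> phi n (xs @ [b]) y"
  by auto

lemma phi_mono_set:
  "phi n xs y \<Longrightarrow> set ys \<subseteq> set xs \<Longrightarrow> phi n ys y"
proof (induction n arbitrary: xs ys)
  case 0 then show ?case by auto
next
  case (Suc n)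
  have S: "set (ys @ [a]) \<subseteq> set (xs @ [a])" for a using Suc.prems(2) by auto
  show ?case
    unfolding phi.simps
  proof (intro allI conjI impI)
    fix a b c
    assume "\<exists>d. d \<in> set ys \<and> d \<le> a"
    then have "phi n (xs @ [a]) y" using Suc.prems phiS_up by blast
    then show "phi n (ys @ [a]) y" using Suc.IH S by blast
  next
    fix a b c
    assume "a \<in> set ys \<and> b \<in> set ys \<and> M a b c"
    then have "phi n (xs @ [c]) y" using Suc.prems phiS_meet by blast
    then show "phi n (ys @ [c]) y" using Suc.IH S by blast
  next
    fix a b c
    assume "c \<in> set ys \<and> J a b c"
    then have "phi n (xs @ [a]) y \<or> phi n (xs @ [b]) y" using Suc.prems phiS_join by blast
    then show "phi n (ys @ [a]) y \<or> phi n (ys @ [b]) y" using Suc.IH S by blast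
  qed
qed

lemma phi_Suc_down: "phi (Suc n) xs y \<Longrightarrow> phi n xs y"
proof (induction n arbitrary: xs)
  case 0
  show ?case
  proof (simp, rule ccontr)
    assume "\<not> y \<notin> set xs"
    then have "y \<in> set xs" by simp
    with 0 have "phi 0 (xs @ [y]) y" by auto
    then show False by simp
  qed
next
  case (Suc n)
  show ?case unfolding phi.simps
  proof (intro allI conjI impI)
    fix a b c
    assume H: "\<exists>d. d \<in> set xs \<and> d \<le> a"
    obtain d where "d \<in> set xs" "d \<le> a" using H by blast
    then have "phi (Suc n) (xs @ [a]) y" using Suc.prems phiS_up by blast
    then show "phi n (xs @ [a]) y" by (rule Suc.IH)
  next
    fix a b c
    assume H: "a \<in> set xs \<and> b \<in> set xs \<and> M a b c"
    have "phi (Suc n) (xs @ [c]) y" using Suc.prems H phiS_meet by blast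
    then show "phi n (xs @ [c]) y" by (rule Suc.IH)
  next
    fix a b c
    assume H: "c \<in> set xs \<and> J a b c"
    have "phi (Suc n) (xs @ [a]) y \<or> phi (Suc n) (xs @ [b]) y" using Suc.prems H phiS_join by blast
    then show "phi n (xs @ [a]) y \<or> phi n (xs @ [b]) y" using Suc.IH by blast
  qed
qed

lemma phi_mono_n: "phi n xs y \<Longrightarrow> m \<le> n \<Longrightarrow> phi m xs y"
proof (induction n)
  case 0 then show ?case by simp
next
  case (Suc n)
  then show ?case using phi_Suc_down by (metis le_Suc_eq)
qed

definition PF :: "'a::order set \<Rightarrow> bool" where
  "PF G \<longleftrightarrow> (\<forall>a b. a \<in> G \<longrightarrow> a \<le> b \<longrightarrow> b \<in> G)
     \<and> (\<forall>a b c. a \<in> G \<longrightarrow> b \<in> G \<longrightarrow> M a b c \<longrightarrow> c \<in> G)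
     \<and> (\<forall>a b c. c \<in> G \<longrightarrow> J a b c \<longrightarrow> a \<in> G \<or> b \<in> G)
     \<and> G \<noteq> {} \<and> G \<noteq> UNIV"

lemma exists_PF:
  fixes x y :: "'a::order"
  assumes ps: "\<forall>n. phi n [x] y"
  shows "\<exists>G. PF G \<and> x \<in> G \<and> y \<notin> G"
proof -
  define C where "C = {G. x \<in> G \<and> (\<forall>xs n. set xs \<subseteq> G \<longrightarrow> phi n xs y)}"
  have xC: "{x} \<in> C" unfolding C_def
  proof (safe)
    fix xs n assume "set xs \<subseteq> {x}"
    then show "phi n xs y" using ps phi_mono_set[of n "[x]" y xs] by auto
  qed
  have "\<exists>G\<in>C. \<forall>X\<in>C. G \<subseteq> X \<longrightarrow> X = G"
  proof (rule subset_Zorn_nonempty)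
    show "C \<noteq> {}" using xC by auto
  next
    fix CC assume ne: "CC \<noteq> {}" and ch: "subset.chain C CC"
    have sub: "CC \<subseteq> C" using ch by (auto simp: pred_on.chain_def)
    show "\<Union>CC \<in> C" unfolding C_def
    proof (safe)
      show "x \<in> \<Union>CC" using ne sub unfolding C_def by auto
    next
      fix xs n assume xs: "set xs \<subseteq> \<Union>CC"
      obtain B where "B \<in> CC" "set xs \<subseteq> B"
        using finite_subset_Union_chain[OF finite_set xs ne ch] by blast
      then show "phi n xs y" using sub unfolding C_def by auto
    qed
  qed
  then obtain G where GC: "G \<in> C" and maxG: "\<And>X. X \<in> C \<Longrightarrow> G \<subseteq> X \<Longrightarrow> X = G" by blast
  have xG: "x \<in> G" and Gph: "\<And>xs n. set xs \<subseteq> G \<Longrightarrow> phi n xs y" using GC unfolding C_def by auto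
  have yG: "y \<notin> G"
  proof
    assume "y \<in> G"
    then have "phi 0 [y] y" using Gph[of "[y]" 0] by auto
    then show False by simp
  qed
  have up: "a \<in> G \<Longrightarrow> a \<le> b \<Longrightarrow> b \<in> G" for a b
  proof -
    assume aG: "a \<in> G" and ab: "a \<le> b"
    have "insert b G \<in> C" unfolding C_def
    proof (intro CollectI conjI allI impI)
      show "x \<in> insert b G" using xG by simp
    next
      fix xs n assume xs: "set xs \<subseteq> insert b G"
      define zs where "zs = filter (\<lambda>z. z \<noteq> b) xs @ [a]"
      have "set zs \<subseteq> G" using xs aG unfolding zs_def by auto
      then have "phi (Suc n) zs y" by (rule Gph)
      then have "phi n (zs @ [b]) y" using ab aG phiS_up[of n zs y a b] unfolding zs_def by simp
      moreover have "set xs \<subseteq> set (zs @ [b])" unfolding zs_def by auto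
      ultimately show "phi n xs y" using phi_mono_set by blast
    qed
    then have "insert b G = G" using maxG by blast
    then show "b \<in> G" by blast
  qed
  have meet: "a \<in> G \<Longrightarrow> b \<in> G \<Longrightarrow> M a b c \<Longrightarrow> c \<in> G" for a b c
  proof -
    assume aG: "a \<in> G" and bG: "b \<in> G" and m: "M a b c"
    have "insert c G \<in> C" unfolding C_def
    proof (intro CollectI conjI allI impI)
      show "x \<in> insert c G" using xG by simp
    next
      fix xs n assume xs: "set xs \<subseteq> insert c G"
      define zs where "zs = filter (\<lambda>z. z \<noteq> c) xs @ [a, b]"
      have "set zs \<subseteq> G" using xs aG bG unfolding zs_def by auto
      then have "phi (Suc n) zs y" by (rule Gph)
      then have "phi n (zs @ [c]) y" using m phiS_meet[of n zs y a b c] unfolding zs_def by simp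
      moreover have "set xs \<subseteq> set (zs @ [c])" unfolding zs_def by auto
      ultimately show "phi n xs y" using phi_mono_set by blast
    qed
    then have "insert c G = G" using maxG by blast
    then show "c \<in> G" by blast
  qed
  have join: "c \<in> G \<Longrightarrow> J a b c \<Longrightarrow> a \<in> G \<or> b \<in> G" for a b c
  proof (rule ccontr)
    assume cG: "c \<in> G" and j: "J a b c" and nab: "\<not> (a \<in> G \<or> b \<in> G)"
    have "insert a G \<notin> C" using maxG nab by blast
    then obtain xs1 n1 where x1: "set xs1 \<subseteq> insert a G" "\<not> phi n1 xs1 y"
      unfolding C_def using xG by auto
    have "insert b G \<notin> C" using maxG nab by blast
    then obtain xs2 n2 where x2: "set xs2 \<subseteq> insert b G" "\<not> phi n2 xs2 y"
      unfolding C_def using xG by auto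
    define n where "n = max n1 n2"
    define zs where "zs = filter (\<lambda>z. z \<noteq> a) xs1 @ filter (\<lambda>z. z \<noteq> b) xs2 @ [c]"
    have "set zs \<subseteq> G" using x1 x2 cG unfolding zs_def by auto
    then have "phi (Suc n) zs y" by (rule Gph)
    then have "phi n (zs @ [a]) y \<or> phi n (zs @ [b]) y" using j phiS_join[of n zs y c a b] unfolding zs_def by simp
    then show False
    proof
      assume "phi n (zs @ [a]) y"
      moreover have "set xs1 \<subseteq> set (zs @ [a])" unfolding zs_def by auto
      ultimately have "phi n xs1 y" using phi_mono_set by blast
      then have "phi n1 xs1 y" using phi_mono_n[of n xs1 y n1] n_def by simp
      then show False using x1 by simp
    next
      assume "phi n (zs @ [b]) y"
      moreover have "set xs2 \<subseteq> set (zs @ [b])" unfolding zs_def by auto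
      ultimately have "phi n xs2 y" using phi_mono_set by blast
      then have "phi n2 xs2 y" using phi_mono_n[of n xs2 y n2] n_def by simp
      then show False using x2 by simp
    qed
  qed
  have "PF G" unfolding PF_def using up meet join xG yG by blast
  then show ?thesis using xG yG by blast
qed

lemma card_lt3_cases:
  assumes "finite S" "card S < 3"
  shows "S = {} \<or> (\<exists>a. S = {a}) \<or> (\<exists>a b. a \<noteq> b \<and> S = {a, b})"
proof -
  have "card S = 0 \<or> card S = 1 \<or> card S = 2" using assms(2) by auto
  then show ?thesis
  proof (elim disjE)
    assume "card S = 0" then have "S = {}" using assms(1) by simp
    then show ?thesis by blast
  next
    assume "card S = 1" then obtain a where "S = {a}" using card_1_singleton_iff[of S] by auto
    then show ?thesis by blast
  next
    assume "card S = 2" then obtain a b where "S = {a, b}" "a \<noteq> b" using card_2_iff[of S] by auto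
    then show ?thesis by blast
  qed
qed

lemma dir1:
  fixes X :: "'b set" and h :: "'a::order \<Rightarrow> 'b set"
  assumes r: "rep3 X h"
  shows "psi n (P::'a itself)"
  unfolding psi_def
proof (intro allI impI)
  fix x y :: 'a
  assume nxy: "\<not> x \<le> y"
  have r4: "(\<forall>p. h p \<subseteq> X) \<and> (\<forall>p q. h p \<subseteq> h q \<longleftrightarrow> p \<le> q)
   \<and> (\<forall>S m. finite S \<and> card S < 3 \<and> is_meet S m \<longrightarrow> h m = X \<inter> \<Inter>(h ` S))
   \<and> (\<forall>T j. finite T \<and> card T < 3 \<and> is_join T j \<longrightarrow> h j = \<Union>(h ` T))"
    using r unfolding rep3_def .
  have sub: "\<And>p. h p \<subseteq> X" using r4 by simp
  have ord: "\<And>p q. h p \<subseteq> h q \<longleftrightarrow> p \<le> q" using r4 by simp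
  have mt: "\<And>S m. finite S \<Longrightarrow> card S < 3 \<Longrightarrow> is_meet S m \<Longrightarrow> h m = X \<inter> \<Inter>(h ` S)"
    using r4 by simp
  have jn: "\<And>T j. finite T \<Longrightarrow> card T < 3 \<Longrightarrow> is_join T j \<Longrightarrow> h j = \<Union>(h ` T)"
    using r4 by simp
  obtain p where p: "p \<in> h x" "p \<notin> h y" using ord[of x y] nxy by blast
  define F where "F = {z. p \<in> h z}"
  have c2: "card {a, b} < 3" for a b :: 'a by (simp add: card_insert_if)
  have "\<And>xs. set xs \<subseteq> F \<Longrightarrow> phi n xs y"
  proof (induction n)
    case 0 then show ?case using p unfolding F_def by auto
  next
    case (Suc n)
    show ?case unfolding phi.simps
    proof (intro allI conjI impI)
      fix a b c :: 'a
      assume "\<exists>d. d \<in> set xs \<and> d \<le> a"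
      then obtain d where "d \<in> F" "d \<le> a" using Suc.prems by auto
      then have "a \<in> F" using ord unfolding F_def by blast
      then show "phi n (xs @ [a]) y" using Suc by auto
    next
      fix a b c :: 'a
      assume H: "a \<in> set xs \<and> b \<in> set xs \<and> M a b c"
      then have "is_meet {a, b} c" unfolding is_meet_def M_def by auto
      then have "h c = X \<inter> \<Inter>(h ` {a, b})" using mt[of "{a, b}" c] c2[of a b] by simp
      moreover have "a \<in> F" "b \<in> F" using H Suc.prems by auto
      ultimately have "c \<in> F" using sub unfolding F_def by auto
      then show "phi n (xs @ [c]) y" using Suc by auto
    next
      fix a b c :: 'a
      assume H: "c \<in> set xs \<and> J a b c"
      then have "is_join {a, b} c" unfolding is_join_def J_def by auto
      then have "h c = \<Union>(h ` {a, b})" using jn[of "{a, b}" c] c2[of a b] by simp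
      moreover have "c \<in> F" using H Suc.prems by auto
      ultimately have "a \<in> F \<or> b \<in> F" unfolding F_def by auto
      then show "phi n (xs @ [a]) y \<or> phi n (xs @ [b]) y" using Suc by auto
    qed
  qed
  moreover have "set [x] \<subseteq> F" using p unfolding F_def by auto
  ultimately show "phi n [x] y" by blast
qed

lemma dir2:
  assumes ps: "\<forall>n. psi n (P::'a::order itself)"
  shows "\<exists>(X::'a set set) (h::'a \<Rightarrow> 'a set set). rep3 X h"
proof -
  define X :: "'a set set" where "X = {G. PF G}"
  define h :: "'a \<Rightarrow> 'a set set" where "h p = {G \<in> X. p \<in> G}" for p
  have sep: "\<not> p \<le> q \<Longrightarrow> \<exists>G. PF G \<and> p \<in> G \<and> q \<notin> G" for p q :: 'a
    using exists_PF ps unfolding psi_def by blast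
  have PFup: "PF (G::'a set) \<Longrightarrow> a \<in> G \<Longrightarrow> a \<le> b \<Longrightarrow> b \<in> G" for G a b unfolding PF_def by blast
  have PFm: "PF (G::'a set) \<Longrightarrow> a \<in> G \<Longrightarrow> b \<in> G \<Longrightarrow> M a b c \<Longrightarrow> c \<in> G" for G a b c unfolding PF_def by blast
  have PFj: "PF (G::'a set) \<Longrightarrow> c \<in> G \<Longrightarrow> J a b c \<Longrightarrow> a \<in> G \<or> b \<in> G" for G a b c unfolding PF_def by blast
  have PFne: "PF (G::'a set) \<Longrightarrow> \<exists>a. a \<in> G" for G unfolding PF_def by blast
  have PFnu: "PF (G::'a set) \<Longrightarrow> \<exists>a. a \<notin> G" for G unfolding PF_def by blast
  have "rep3 X h" unfolding rep3_def
  proof (intro conjI allI impI)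
    fix p show "h p \<subseteq> X" unfolding h_def by auto
  next
    fix p q :: 'a
    show "h p \<subseteq> h q \<longleftrightarrow> p \<le> q"
    proof
      assume "h p \<subseteq> h q"
      then show "p \<le> q" using sep[of p q] unfolding h_def X_def by blast
    next
      assume "p \<le> q" then show "h p \<subseteq> h q" using PFup unfolding h_def X_def by blast
    qed
  next
    fix S and m :: 'a
    assume H: "finite S \<and> card S < 3 \<and> is_meet S m"
    then have im: "is_meet S m" by blast
    from card_lt3_cases H consider "S = {}" | a where "S = {a}" | a b where "a \<noteq> b" "S = {a, b}"
      by blast
    then show "h m = X \<inter> \<Inter>(h ` S)"
    proof cases
      case 1
      then have "\<forall>w. w \<le> m" using im unfolding is_meet_def by auto
      then have top: "\<forall>w. w \<le> m" .
      have "G \<in> h m" if "G \<in> X" for G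
      proof -
        have "PF G" using that unfolding X_def by simp
        then obtain a where "a \<in> G" using PFne by blast
        then have "m \<in> G" using PFup[OF \<open>PF G\<close>] top by blast
        then show ?thesis using that unfolding h_def by simp
      qed
      then show ?thesis using 1 unfolding h_def by auto
    next
      case (2 a)
      then have "m = a" using im unfolding is_meet_def by (auto intro: order.antisym)
      then show ?thesis using 2 unfolding h_def by auto
    next
      case (3 a b)
      then have "M a b m" using im unfolding is_meet_def M_def by auto
      then have "m \<le> a" "m \<le> b" unfolding M_def by auto
      then show ?thesis using 3 PFup PFm[OF _ _ _ \<open>M a b m\<close>] unfolding h_def X_def by auto
    qed
  next
    fix T and j :: 'a
    assume H: "finite T \<and> card T < 3 \<and> is_join T j"
    then have ij: "is_join T j" by blast
    from card_lt3_cases H consider "T = {}" | a where "T = {a}" | a b where "a \<noteq> b" "T = {a, b}"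
      by blast
    then show "h j = \<Union>(h ` T)"
    proof cases
      case 1
      then have "\<forall>w. j \<le> w" using ij unfolding is_join_def by auto
      then have bot: "\<forall>w. j \<le> w" .
      have "G \<notin> h j" for G
      proof
        assume "G \<in> h j"
        then have "PF G" "j \<in> G" unfolding h_def X_def by auto
        then obtain a where "a \<notin> G" using PFnu by blast
        then show False using PFup[OF \<open>PF G\<close> \<open>j \<in> G\<close>] bot by blast
      qed
      then show ?thesis using 1 by auto
    next
      case (2 a)
      then have "j = a" using ij unfolding is_join_def by (auto intro: order.antisym)
      then show ?thesis using 2 unfolding h_def by auto
    next
      case (3 a b)
      then have "J a b j" using ij unfolding is_join_def J_def by auto
      then have "a \<le> j" "b \<le> j" unfolding J_def by auto
      then show ?thesis using 3 PFup PFj[OF _ _ \<open>J a b j\<close>] unfolding h_def X_def by auto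
    qed
  qed
  then show ?thesis by blast
qed

theorem theorem4p3:
  fixes P :: "('a::order) itself"
  shows "((\<exists>(X::'b set) (h::'a \<Rightarrow> 'b set). rep3 X h) \<longrightarrow> (\<forall>n. psi n P))
       \<and> ((\<forall>n. psi n P) \<longrightarrow> (\<exists>(X::'a set set) (h::'a \<Rightarrow> 'a set set). rep3 X h))"
  using dir1 dir2 by blast

end
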